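(* Let $X_0=0$ and $X_n=\sum_{j=1}^{X_{n-1}}\xi_{n,j}+\varepsilon_n$ for $n\ge 1$, where $\{\xi_{n,j},\varepsilon_n : n,j\in\mathbb N\}$ are independent nonnegative integer-valued random variables and, for each $n$, the $\xi_{n,j}$, $j\in\mathbb N$, are identically distributed. Let $G_n(x)=\mathbb E x^{\xi_{n,1}}$, $\rho_n=G_n'(1)=\mathbb E\xi_{n,1}$, and assume $G_n''(1)<\infty$ for all $n$. Assume that $\varepsilon_n\sim\mathrm{Bernoulli}(m_{n,1})$ and that (i) $\rho_n<1$ for all $n$, $\lim_{n\to\infty}\rho_n=1$, $\sum_{n=1}^\infty(1-\rho_n)=\infty$, and $\lim_{n\to\infty}G_n''(1)/(1-\rho_n)=0$; (ii) $\lim_{n\to\infty} m_{n,1}/(1-\rho_n)=\lambda$ for some $\lambda\ge 0$. Then $X_n$ converges in distribution to $\mathrm{Poisson}(\lambda)$.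
   Context: $\mathrm{Poisson}(0)$ denotes the point mass at $0$. $\mathrm{Bernoulli}(p)$ is the distribution with $\mathbb P(1)=p=1-\mathbb P(0)$. *)

theory Defs
  imports "HOL-Probability.Probability"
begin

text \<open>Poisson distribution with parameter lam \<ge> 0 on the naturals; Poisson(0) is the
  point mass at 0 (the library's poisson_pmf requires a positive rate).\<close>
definition poisson0_pmf :: "real \<Rightarrow> nat pmf" where
  "poisson0_pmf lam = (if lam = 0 then return_pmf 0 else poisson_pmf lam)"

definition bernoulli_nat_pmf :: "real \<Rightarrow> nat pmf" where
  "bernoulli_nat_pmf p = map_pmf (\<lambda>b. if b then 1 else 0) (bernoulli_pmf p)"

definition real_law :: "'a measure \<Rightarrow> ('a \<Rightarrow> nat) \<Rightarrow> real measure" where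
  "real_law M Y = distr M borel (\<lambda>\<omega>. real (Y \<omega>))"

end

theory Submission
  imports Defs
begin


lemma prod_tail_tendsto_zero:
  fixes r :: "nat \<Rightarrow> real"
  assumes r0: "\<And>n. 1 \<le> n \<Longrightarrow> 0 \<le> r n"
    and div: "filterlim (\<lambda>N. \<Sum>n = 1..N. 1 - r n) at_top sequentially"
  shows "(\<lambda>n. \<Prod>j\<in>{Suc N0..n}. r j) \<longlonglongrightarrow> 0"
proof -
  have tail: "filterlim (\<lambda>n. \<Sum>j = Suc N0..n. 1 - r j) at_top sequentially"
  proof -
    have "filterlim (\<lambda>n. (- (\<Sum>j = 1..N0. 1 - r j)) + (\<Sum>j = 1..n. 1 - r j)) at_top sequentially"
      by (rule filterlim_tendsto_add_at_top[OF tendsto_const div])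
    moreover have "eventually (\<lambda>n. (- (\<Sum>j = 1..N0. 1 - r j)) + (\<Sum>j = 1..n. 1 - r j)
        = (\<Sum>j = Suc N0..n. 1 - r j)) sequentially"
    proof (rule eventually_sequentiallyI[of N0])
      fix n assume "N0 \<le> n"
      hence "{1..n} = {1..N0} \<union> {Suc N0..n}" by auto
      moreover have "{1..N0} \<inter> {Suc N0..n} = {}" by auto
      ultimately have "(\<Sum>j = 1..n. 1 - r j) = (\<Sum>j = 1..N0. 1 - r j) + (\<Sum>j = Suc N0..n. 1 - r j)"
        by (simp add: sum.union_disjoint)
      thus "(- (\<Sum>j = 1..N0. 1 - r j)) + (\<Sum>j = 1..n. 1 - r j) = (\<Sum>j = Suc N0..n. 1 - r j)" by simp
    qed
    ultimately show ?thesis by (rule filterlim_cong[OF refl refl, THEN iffD1, rotated])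
  qed
  have ex: "(\<lambda>n. exp (- (\<Sum>j = Suc N0..n. 1 - r j))) \<longlonglongrightarrow> 0"
    using filterlim_compose[OF exp_at_bot filterlim_compose[OF filterlim_uminus_at_bot_at_top tail]]
    by (simp add: o_def)
  show ?thesis
  proof (rule tendsto_sandwich[OF _ _ tendsto_const ex])
    show "\<forall>\<^sub>F n in sequentially. 0 \<le> (\<Prod>j\<in>{Suc N0..n}. r j)"
      using r0 by (intro always_eventually allI prod_nonneg) auto
    show "\<forall>\<^sub>F n in sequentially. (\<Prod>j\<in>{Suc N0..n}. r j) \<le> exp (- (\<Sum>j = Suc N0..n. 1 - r j))"
    proof (intro always_eventually allI)
      fix n
      have "(\<Prod>j\<in>{Suc N0..n}. r j) \<le> (\<Prod>j\<in>{Suc N0..n}. exp (r j - 1))"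
        apply (rule prod_mono) using r0 by (auto simp: add.commute[of 1] intro!: exp_ge_add_one_self[of "r _ - 1", simplified])
      also have "\<dots> = exp (- (\<Sum>j = Suc N0..n. 1 - r j))"
        by (simp add: exp_sum[symmetric] sum_negf[symmetric])
      finally show "(\<Prod>j\<in>{Suc N0..n}. r j) \<le> exp (- (\<Sum>j = Suc N0..n. 1 - r j))" .
    qed
  qed
qed

lemma d_tendsto_zero:
  fixes r c d :: "nat \<Rightarrow> real"
  assumes r0: "\<And>n. 1 \<le> n \<Longrightarrow> 0 \<le> r n" and r1: "\<And>n. 1 \<le> n \<Longrightarrow> r n < 1"
    and div: "filterlim (\<lambda>N. \<Sum>n = 1..N. 1 - r n) at_top sequentially"
    and c0: "\<And>n. 1 \<le> n \<Longrightarrow> 0 \<le> c n"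
    and clim: "(\<lambda>n. c n / (1 - r n)) \<longlonglongrightarrow> 0"
    and d0: "0 \<le> d 0"
    and dS: "\<And>n. d (Suc n) = r (Suc n) * d n + c (Suc n)"
  shows "d \<longlonglongrightarrow> 0"
proof (rule LIMSEQ_I)
  have dnn: "0 \<le> d n" for n
    by (induction n) (auto simp: dS c0 r0 d0)
  fix e :: real assume e: "0 < e"
  from clim have "eventually (\<lambda>n. c n / (1 - r n) < e/2) sequentially"
    using e by (auto dest!: order_tendstoD(2)[where a="e/2"])
  then obtain N1 where N1: "\<And>n. n \<ge> N1 \<Longrightarrow> c n / (1 - r n) < e/2"
    by (auto simp: eventually_sequentially)
  define N where "N = Suc N1"
  have cle: "c n \<le> e/2 * (1 - r n)" if "n \<ge> N" for n
  proof -
    have "1 - r n > 0" using r1[of n] that N_def by auto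
    with N1[of n] that N_def show ?thesis by (simp add: field_simps)
  qed
  have key: "d n - e/2 \<le> (\<Prod>j\<in>{Suc N..n}. r j) * d N" if "n \<ge> N" for n
    using that
  proof (induction n rule: dec_induct)
    case base then show ?case using e by simp
  next
    case (step n)
    have rS: "0 \<le> r (Suc n)" using r0 by simp
    have "d (Suc n) - e/2 \<le> r (Suc n) * (d n - e/2)"
      using cle[of "Suc n"] step.hyps by (simp add: dS algebra_simps)
    also have "\<dots> \<le> r (Suc n) * ((\<Prod>j\<in>{Suc N..n}. r j) * d N)"
      by (rule mult_left_mono[OF step.IH rS])
    also have "\<dots> = (\<Prod>j\<in>{Suc N..Suc n}. r j) * d N"
      using step.hyps by (simp add: prod.nat_ivl_Suc' mult_ac)
    finally show ?case .
  qed
  have "(\<lambda>n. (\<Prod>j\<in>{Suc N..n}. r j) * d N) \<longlonglongrightarrow> 0 * d N"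
    by (intro tendsto_mult prod_tail_tendsto_zero[OF r0 div] tendsto_const) auto
  hence "eventually (\<lambda>n. (\<Prod>j\<in>{Suc N..n}. r j) * d N < e/2) sequentially"
    using e by (auto dest!: order_tendstoD(2)[where a="e/2"])
  then obtain N2 where N2: "\<And>n. n \<ge> N2 \<Longrightarrow> (\<Prod>j\<in>{Suc N..n}. r j) * d N < e/2"
    by (auto simp: eventually_sequentially)
  show "\<exists>no. \<forall>n\<ge>no. norm (d n - 0) < e"
  proof (intro exI allI impI)
    fix n assume "max N N2 \<le> n"
    with key[of n] N2[of n] dnn[of n] show "norm (d n - 0) < e" by auto
  qed
qed



lemma pow_taylor_bound:
  fixes w :: complex
  assumes "norm w \<le> 1"
  shows "norm (w^k - 1 + of_nat k * (1 - w)) \<le> real (k * (k - 1)) * norm (1 - w)"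
proof (induction k)
  case 0 then show ?case by simp
next
  case (Suc k)
  have u2: "norm (1 - w) \<le> 2"
    using norm_triangle_ineq4[of 1 w] assms by simp
  have eq: "w^Suc k - 1 + of_nat (Suc k) * (1 - w) = w * (w^k - 1 + of_nat k * (1 - w)) + of_nat k * (1 - w)^2"
    by (simp add: algebra_simps power2_eq_square)
  have "norm (w^Suc k - 1 + of_nat (Suc k) * (1 - w)) \<le> norm (w * (w^k - 1 + of_nat k * (1 - w))) + norm (of_nat k * (1 - w)^2)"
    unfolding eq by (rule norm_triangle_ineq)
  also have "norm (w * (w^k - 1 + of_nat k * (1 - w))) \<le> 1 * (real (k * (k - 1)) * norm (1 - w))"
    unfolding norm_mult by (intro mult_mono Suc assms) auto
  also have "norm (of_nat k * (1 - w)^2) = real k * norm (1 - w) * norm (1 - w)"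
    by (simp add: norm_mult norm_power power2_eq_square)
  also have "\<dots> \<le> real k * norm (1 - w) * 2"
    by (intro mult_left_mono u2) auto
  also have "1 * (real (k * (k - 1)) * norm (1 - w)) + real k * norm (1 - w) * 2 = real (Suc k * (Suc k - 1)) * norm (1 - w)"
    by (cases k) (auto simp: algebra_simps)
  finally show ?case by simp
qed

lemma exp_sub1_bound:
  fixes x :: complex
  shows "norm (exp x - 1) \<le> exp (norm x) * norm x"
  using Taylor_exp_field[of x 0] by simp

lemma exp_sub1x_bound:
  fixes x :: complex
  shows "norm (exp x - 1 - x) \<le> exp (norm x) * norm x ^ 2"
  using Taylor_exp_field[of x 1] by (simp add: power2_eq_square algebra_simps)

lemma norm_exp_le1:
  fixes a :: real and z :: complex
  assumes "0 \<le> a" "norm z \<le> 1"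
  shows "norm (exp (- (of_real a * (1 - z)))) \<le> 1"
proof -
  have "Re z \<le> 1" using complex_Re_le_cmod[of z] assms by linarith
  hence "Re (- (of_real a * (1 - z))) \<le> 0" using assms by (simp add: mult_nonneg_nonneg)
  thus ?thesis by (simp add: norm_exp_eq_Re)
qed

context prob_space begin

lemma pgf_bounds:
  fixes Z :: "'a \<Rightarrow> nat" and w :: complex
  assumes Zm: "Z \<in> measurable M (count_space UNIV)"
    and i1: "integrable M (\<lambda>\<omega>. real (Z \<omega>))"
    and i2: "integrable M (\<lambda>\<omega>. real (Z \<omega> * (Z \<omega> - 1)))"
    and w: "norm w \<le> 1"
  shows "norm (\<integral>\<omega>. w ^ Z \<omega> \<partial>M) \<le> 1"
    and "norm (1 - (\<integral>\<omega>. w ^ Z \<omega> \<partial>M)) \<le> expectation (\<lambda>\<omega>. real (Z \<omega>)) * norm (1 - w)"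
    and "norm ((\<integral>\<omega>. w ^ Z \<omega> \<partial>M) - (1 - of_real (expectation (\<lambda>\<omega>. real (Z \<omega>))) * (1 - w)))
          \<le> expectation (\<lambda>\<omega>. real (Z \<omega> * (Z \<omega> - 1))) * norm (1 - w)"
proof -
  have m1[measurable]: "(\<lambda>\<omega>. w ^ Z \<omega>) \<in> borel_measurable M"
    by (rule measurable_compose[OF Zm]) simp
  have int1: "integrable M (\<lambda>\<omega>. w ^ Z \<omega>)"
    by (rule integrable_const_bound[where B=1]) (auto simp: norm_power w power_le_one)
  have intc: "integrable M (\<lambda>\<omega>. complex_of_real (real (Z \<omega>)))"
    using i1 by (rule integrable_of_real)
  show "norm (\<integral>\<omega>. w ^ Z \<omega> \<partial>M) \<le> 1"
  proof -
    have "norm (\<integral>\<omega>. w ^ Z \<omega> \<partial>M) \<le> (\<integral>\<omega>. norm (w ^ Z \<omega>) \<partial>M)"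
      by (rule integral_norm_bound)
    also have "\<dots> \<le> (\<integral>\<omega>. 1 \<partial>M)"
      by (intro integral_mono integrable_norm int1) (auto simp: norm_power w power_le_one)
    finally show ?thesis by (simp add: prob_space)
  qed
  have e1: "1 - (\<integral>\<omega>. w ^ Z \<omega> \<partial>M) = (\<integral>\<omega>. 1 - w ^ Z \<omega> \<partial>M)"
    using int1 by (simp add: prob_space)
  show "norm (1 - (\<integral>\<omega>. w ^ Z \<omega> \<partial>M)) \<le> expectation (\<lambda>\<omega>. real (Z \<omega>)) * norm (1 - w)"
  proof -
    have "norm (\<integral>\<omega>. 1 - w ^ Z \<omega> \<partial>M) \<le> (\<integral>\<omega>. norm (1 - w ^ Z \<omega>) \<partial>M)"
      by (rule integral_norm_bound)
    also have "\<dots> \<le> (\<integral>\<omega>. real (Z \<omega>) * norm (1 - w) \<partial>M)"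
    proof (rule integral_mono)
      show "integrable M (\<lambda>\<omega>. norm (1 - w ^ Z \<omega>))" using int1 by auto
      show "integrable M (\<lambda>\<omega>. real (Z \<omega>) * norm (1 - w))" using i1 by auto
      fix \<omega> show "norm (1 - w ^ Z \<omega>) \<le> real (Z \<omega>) * norm (1 - w)"
        using norm_power_diff[of 1 w "Z \<omega>"] w by simp
    qed
    finally show ?thesis using e1 by simp
  qed
  have e2: "(\<integral>\<omega>. w ^ Z \<omega> \<partial>M) - (1 - of_real (expectation (\<lambda>\<omega>. real (Z \<omega>))) * (1 - w))
      = (\<integral>\<omega>. w ^ Z \<omega> - 1 + complex_of_real (real (Z \<omega>)) * (1 - w) \<partial>M)"
  proof -
    have ce: "(\<integral>\<omega>. complex_of_nat (Z \<omega>) \<partial>M) = of_real (expectation (\<lambda>\<omega>. real (Z \<omega>)))"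
      using integral_complex_of_real[of M "\<lambda>\<omega>. real (Z \<omega>)"] by simp
    show ?thesis using int1 intc by (simp add: prob_space algebra_simps ce)
  qed
  show "norm ((\<integral>\<omega>. w ^ Z \<omega> \<partial>M) - (1 - of_real (expectation (\<lambda>\<omega>. real (Z \<omega>))) * (1 - w)))
          \<le> expectation (\<lambda>\<omega>. real (Z \<omega> * (Z \<omega> - 1))) * norm (1 - w)"
  proof -
    have "norm (\<integral>\<omega>. w ^ Z \<omega> - 1 + complex_of_real (real (Z \<omega>)) * (1 - w) \<partial>M)
        \<le> (\<integral>\<omega>. norm (w ^ Z \<omega> - 1 + complex_of_real (real (Z \<omega>)) * (1 - w)) \<partial>M)"
      by (rule integral_norm_bound)
    also have "\<dots> \<le> (\<integral>\<omega>. real (Z \<omega> * (Z \<omega> - 1)) * norm (1 - w) \<partial>M)"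
    proof (rule integral_mono)
      show "integrable M (\<lambda>\<omega>. norm (w ^ Z \<omega> - 1 + complex_of_real (real (Z \<omega>)) * (1 - w)))"
        using int1 intc by (intro integrable_norm Bochner_Integration.integrable_add Bochner_Integration.integrable_diff integrable_mult_left) auto
      show "integrable M (\<lambda>\<omega>. real (Z \<omega> * (Z \<omega> - 1)) * norm (1 - w))" using i2 by auto
      fix \<omega> show "norm (w ^ Z \<omega> - 1 + complex_of_real (real (Z \<omega>)) * (1 - w)) \<le> real (Z \<omega> * (Z \<omega> - 1)) * norm (1 - w)"
        using pow_taylor_bound[OF w, of "Z \<omega>"] by simp
    qed
    finally show ?thesis using e2 by simp
  qed
qed

end


lemma phi_psi_bound:
  fixes \<phi> G :: "nat \<Rightarrow> complex \<Rightarrow> complex" and \<rho> m G2 d :: "nat \<Rightarrow> real" and lam :: real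
  assumes \<phi>0: "\<And>w. \<phi> 0 w = 1"
    and \<phi>S: "\<And>n w. norm w \<le> 1 \<Longrightarrow> \<phi> (Suc n) w = \<phi> n (G (Suc n) w) * (1 - of_real (m (Suc n)) * (1 - w))"
    and \<phi>b: "\<And>n w. norm w \<le> 1 \<Longrightarrow> norm (\<phi> n w) \<le> 1"
    and Gb1: "\<And>n w. 1 \<le> n \<Longrightarrow> norm w \<le> 1 \<Longrightarrow> norm (G n w) \<le> 1"
    and Gb2: "\<And>n w. 1 \<le> n \<Longrightarrow> norm w \<le> 1 \<Longrightarrow> norm (1 - G n w) \<le> \<rho> n * norm (1 - w)"
    and Gb3: "\<And>n w. 1 \<le> n \<Longrightarrow> norm w \<le> 1 \<Longrightarrow> norm (G n w - (1 - of_real (\<rho> n) * (1 - w))) \<le> G2 n * norm (1 - w)"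
    and \<rho>0: "\<And>n. 1 \<le> n \<Longrightarrow> 0 \<le> \<rho> n" and \<rho>1: "\<And>n. 1 \<le> n \<Longrightarrow> \<rho> n \<le> 1"
    and m01: "\<And>n. 1 \<le> n \<Longrightarrow> 0 \<le> m n \<and> m n \<le> 1"
    and lam: "0 \<le> lam"
    and d0: "d 0 = 0"
    and dS: "\<And>n. d (Suc n) = \<rho> (Suc n) * d n + (exp (2*lam) * lam * G2 (Suc n) + \<bar>m (Suc n) - lam * (1 - \<rho> (Suc n))\<bar>
                 + 2 * exp (2*lam) * lam^2 * (1 - \<rho> (Suc n))^2)"
  shows "norm w \<le> 1 \<Longrightarrow> norm (\<phi> n w - exp (- (of_real (lam * (1 - (\<Prod>j=1..n. \<rho> j))) * (1 - w)))) \<le> d n * norm (1 - w)"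
proof (induction n arbitrary: w)
  case 0 then show ?case by (simp add: \<phi>0 d0)
next
  case (Suc n)
  note w = Suc.prems
  define \<pi> where "\<pi> k = (\<Prod>j=1..k. \<rho> j)" for k
  define \<psi> :: "nat \<Rightarrow> complex \<Rightarrow> complex" where "\<psi> k z = exp (- (of_real (lam * (1 - \<pi> k)) * (1 - z)))" for k z
  have \<pi>01: "0 \<le> \<pi> k \<and> \<pi> k \<le> 1" for k
    unfolding \<pi>_def using \<rho>0 \<rho>1 by (auto intro!: prod_nonneg prod_le_1)
  have \<pi>S: "\<pi> (Suc n) = \<pi> n * \<rho> (Suc n)"
    by (simp add: \<pi>_def)
  have a0: "0 \<le> lam * (1 - \<pi> n)" and aL: "lam * (1 - \<pi> n) \<le> lam"
    using \<pi>01[of n] lam by (auto simp: mult_left_le)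
  define u where "u = 1 - w"
  define r where "r = \<rho> (Suc n)"
  define mm where "mm = m (Suc n)"
  define g2 where "g2 = G2 (Suc n)"
  have r01: "0 \<le> r" "r \<le> 1" using \<rho>0 \<rho>1 by (auto simp: r_def)
  have mm01: "0 \<le> mm" "mm \<le> 1" using m01[of "Suc n"] by (auto simp: mm_def)
  have u2: "norm u \<le> 2" using norm_triangle_ineq4[of 1 w] w by (simp add: u_def)
  define z1 where "z1 = G (Suc n) w"
  define z2 where "z2 = 1 - of_real r * u"
  have z1b: "norm z1 \<le> 1" using Gb1[of "Suc n" w] w by (simp add: z1_def)
  have z2b: "norm z2 \<le> 1"
  proof -
    have "z2 = of_real (1 - r) + of_real r * w" by (simp add: z2_def u_def algebra_simps)
    hence "norm z2 \<le> (1 - r) + r * norm w"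
      using norm_triangle_ineq[of "of_real (1 - r)" "of_real r * w"] r01 by (simp only: norm_mult norm_of_real abs_of_nonneg)
    also have "\<dots> \<le> (1 - r) + r * 1" using r01 w by (intro add_left_mono mult_left_mono) auto
    finally show ?thesis by simp
  qed
  have z12: "norm (z1 - z2) \<le> g2 * norm u"
    using Gb3[of "Suc n" w] w by (simp add: z1_def z2_def g2_def r_def u_def)
  have g2nn: "0 \<le> g2"
  proof -
    have "0 \<le> norm (G (Suc n) 0 - (1 - of_real (\<rho> (Suc n)) * (1 - 0)))" by simp
    also have "\<dots> \<le> G2 (Suc n) * norm (1 - (0::complex))" by (rule Gb3) auto
    finally show ?thesis by (simp add: g2_def)
  qed
  define B where "B = 1 - of_real mm * u"
  have Bb: "norm B \<le> 1"
  proof -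
    have "B = of_real (1 - mm) + of_real mm * w" by (simp add: B_def u_def algebra_simps)
    hence "norm B \<le> (1 - mm) + mm * norm w"
      using norm_triangle_ineq[of "of_real (1 - mm)" "of_real mm * w"] mm01 by (simp only: norm_mult norm_of_real abs_of_nonneg diff_ge_0_iff_ge)
    also have "\<dots> \<le> (1 - mm) + mm * 1" using mm01 w by (intro add_left_mono mult_left_mono) auto
    finally show ?thesis by simp
  qed
  define x where "x = - (of_real (lam * (1 - r)) * u)"
  define E where "E = exp x"
  have psiS: "\<psi> (Suc n) w = \<psi> n z2 * E"
    unfolding \<psi>_def E_def x_def z2_def \<pi>S
    by (simp add: exp_add[symmetric] u_def r_def algebra_simps)
  have phiS: "\<phi> (Suc n) w = \<phi> n z1 * B"
    using \<phi>S[OF w] by (simp add: z1_def B_def mm_def u_def)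
  have dn: "0 \<le> d n"
  proof -
    have "0 \<le> norm (\<phi> n 0 - \<psi> n 0)" by simp
    also have "\<dots> \<le> d n * norm (1 - (0::complex))" using Suc.IH[of 0] by (simp add: \<psi>_def \<pi>_def)
    finally show ?thesis by simp
  qed
  have T1: "norm ((\<phi> n z1 - \<psi> n z1) * B) \<le> d n * r * norm u"
  proof -
    have "norm ((\<phi> n z1 - \<psi> n z1) * B) \<le> norm (\<phi> n z1 - \<psi> n z1) * 1"
      unfolding norm_mult by (intro mult_left_mono Bb) auto
    also have "\<dots> \<le> d n * norm (1 - z1)" using Suc.IH[OF z1b] by (simp add: \<psi>_def \<pi>_def)
    also have "\<dots> \<le> d n * (r * norm u)"
      using Gb2[of "Suc n" w] w dn by (intro mult_left_mono) (auto simp: z1_def r_def u_def)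
    finally show ?thesis by simp
  qed
  have T2: "norm ((\<psi> n z1 - \<psi> n z2) * B) \<le> exp (2*lam) * lam * g2 * norm u"
  proof -
    define a where "a = lam * (1 - \<pi> n)"
    define p where "p = of_real a * (z1 - z2)"
    have "\<psi> n z1 = \<psi> n z2 * exp p"
      unfolding \<psi>_def p_def a_def by (simp add: exp_add[symmetric] algebra_simps)
    hence eq: "\<psi> n z1 - \<psi> n z2 = \<psi> n z2 * (exp p - 1)" by (simp add: algebra_simps)
    have psib: "norm (\<psi> n z2) \<le> 1" unfolding \<psi>_def by (rule norm_exp_le1[OF a0 z2b])
    have pb: "norm p \<le> lam * (g2 * norm u)"
    proof -
      have "norm p = a * norm (z1 - z2)" unfolding p_def a_def norm_mult norm_of_real abs_of_nonneg[OF a0] ..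
      also have "\<dots> \<le> lam * (g2 * norm u)" using aL a0 z12 lam by (intro mult_mono) (auto simp: a_def)
      finally show ?thesis .
    qed
    have pb2: "norm p \<le> 2 * lam"
    proof -
      have "norm (z1 - z2) \<le> 2" using norm_triangle_ineq4[of z1 z2] z1b z2b by simp
      have "norm p = a * norm (z1 - z2)" unfolding p_def a_def norm_mult norm_of_real abs_of_nonneg[OF a0] ..
      also have "\<dots> \<le> lam * 2" using aL a0 \<open>norm (z1 - z2) \<le> 2\<close> lam by (intro mult_mono) (auto simp: a_def)
      finally show ?thesis by simp
    qed
    have "norm ((\<psi> n z1 - \<psi> n z2) * B) \<le> norm (exp p - 1)"
    proof -
      have "norm (\<psi> n z2) * norm (exp p - 1) * norm B \<le> 1 * norm (exp p - 1) * 1"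
        using psib Bb by (intro mult_mono) auto
      thus ?thesis unfolding eq norm_mult by simp
    qed
    also have "\<dots> \<le> exp (norm p) * norm p" by (rule exp_sub1_bound)
    also have "\<dots> \<le> exp (2*lam) * (lam * (g2 * norm u))"
      using pb pb2 by (intro mult_mono) auto
    finally show ?thesis by (simp add: mult_ac)
  qed
  have T3: "norm (\<psi> n z2 * (B - E)) \<le> (\<bar>mm - lam * (1 - r)\<bar> + 2 * exp (2*lam) * lam^2 * (1 - r)^2) * norm u"
  proof -
    have psib: "norm (\<psi> n z2) \<le> 1" unfolding \<psi>_def by (rule norm_exp_le1[OF a0 z2b])
    have eq: "B - E = - (exp x - 1 - x) + of_real (lam * (1 - r) - mm) * u"
      by (simp add: B_def E_def x_def algebra_simps)
    have xn: "norm x = lam * (1 - r) * norm u"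
      using lam r01 unfolding x_def norm_minus_cancel norm_mult norm_of_real by simp
    have xb: "norm x \<le> 2 * lam"
    proof -
      have "lam * (1 - r) * norm u \<le> lam * 1 * 2" using lam r01 u2 by (intro mult_mono) auto
      thus ?thesis unfolding xn by simp
    qed
    have "norm (exp x - 1 - x) \<le> exp (norm x) * norm x ^ 2" by (rule exp_sub1x_bound)
    also have "\<dots> \<le> exp (2*lam) * (2 * lam^2 * (1 - r)^2 * norm u)"
    proof (intro mult_mono)
      show "exp (norm x) \<le> exp (2*lam)" using xb by simp
      have "norm x ^ 2 = lam^2 * (1 - r)^2 * (norm u * norm u)" unfolding xn by (simp add: power2_eq_square)
      also have "\<dots> \<le> lam^2 * (1 - r)^2 * (2 * norm u)"
        using u2 by (intro mult_left_mono) (auto intro!: mult_right_mono)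
      finally show "norm x ^ 2 \<le> 2 * lam^2 * (1 - r)^2 * norm u" by simp
    qed auto
    finally have e1: "norm (exp x - 1 - x) \<le> 2 * exp (2*lam) * lam^2 * (1 - r)^2 * norm u" by (simp add: mult_ac)
    have "norm (B - E) \<le> norm (exp x - 1 - x) + norm (of_real (lam * (1 - r) - mm) * u)"
      unfolding eq using norm_triangle_ineq[of "- (exp x - 1 - x)"] by (metis norm_minus_cancel)
    also have "norm (of_real (lam * (1 - r) - mm) * u) = \<bar>mm - lam * (1 - r)\<bar> * norm u"
      unfolding norm_mult norm_of_real by (simp add: abs_minus_commute)
    finally have "norm (B - E) \<le> (\<bar>mm - lam * (1 - r)\<bar> + 2 * exp (2*lam) * lam^2 * (1 - r)^2) * norm u"
      using e1 by (simp add: algebra_simps)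
    moreover have "norm (\<psi> n z2 * (B - E)) \<le> norm (B - E)"
      unfolding norm_mult using psib by (simp add: mult_left_le_one_le)
    ultimately show ?thesis by linarith
  qed
  have "\<phi> (Suc n) w - \<psi> (Suc n) w = (\<phi> n z1 - \<psi> n z1) * B + (\<psi> n z1 - \<psi> n z2) * B + \<psi> n z2 * (B - E)"
    unfolding phiS psiS by (simp add: algebra_simps)
  hence "norm (\<phi> (Suc n) w - \<psi> (Suc n) w) \<le> norm ((\<phi> n z1 - \<psi> n z1) * B) + norm ((\<psi> n z1 - \<psi> n z2) * B) + norm (\<psi> n z2 * (B - E))"
    by (metis norm_triangle_ineq order_trans add_right_mono)
  also have "\<dots> \<le> d n * r * norm u + exp (2*lam) * lam * g2 * norm u + (\<bar>mm - lam * (1 - r)\<bar> + 2 * exp (2*lam) * lam^2 * (1 - r)^2) * norm u"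
    using T1 T2 T3 by linarith
  also have "\<dots> = d (Suc n) * norm u"
    by (simp add: dS r_def mm_def g2_def algebra_simps)
  finally show ?case by (simp add: \<psi>_def \<pi>_def u_def)
qed



fun xf :: "nat \<Rightarrow> ((nat \<times> nat) + nat \<Rightarrow> nat) \<Rightarrow> nat" where
  "xf 0 f = 0"
| "xf (Suc n) f = (\<Sum>j = 1..xf n f. f (Inl (Suc n, j))) + f (Inr (Suc n))"

definition Past :: "nat \<Rightarrow> ((nat \<times> nat) + nat) set" where
  "Past n = {Inl (k, j) | k j. 1 \<le> k \<and> k \<le> n \<and> 1 \<le> j} \<union> {Inr k | k. 1 \<le> k \<and> k \<le> n}"

lemma xf_cong: "(\<And>i. i \<in> Past n \<Longrightarrow> f i = g i) \<Longrightarrow> xf n f = xf n g"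
proof (induction n)
  case 0 then show ?case by simp
next
  case (Suc n)
  have "Past n \<subseteq> Past (Suc n)" by (auto simp: Past_def)
  hence IH: "xf n f = xf n g" using Suc by blast
  have "f (Inl (Suc n, j)) = g (Inl (Suc n, j))" if "1 \<le> j" for j
    using Suc.prems[of "Inl (Suc n, j)"] that by (auto simp: Past_def)
  moreover have "f (Inr (Suc n)) = g (Inr (Suc n))"
    using Suc.prems[of "Inr (Suc n)"] by (auto simp: Past_def)
  ultimately show ?case by (simp add: IH)
qed

lemma meas_sumf: "(\<And>j. j \<in> A \<Longrightarrow> a j \<in> J) \<Longrightarrow> finite A \<Longrightarrow> b \<in> J \<Longrightarrow>
   (\<lambda>f. (\<Sum>j\<in>A. (f (a j)::nat)) + f b) \<in> measurable (PiM J (\<lambda>_. count_space UNIV)) (count_space UNIV)"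
  by measurable

lemma meas_add_nat:
  assumes g: "g \<in> measurable N (count_space UNIV)" and h: "h \<in> measurable N (count_space UNIV)"
  shows "(\<lambda>x. (g x + h x :: nat)) \<in> measurable N (count_space UNIV)"
proof -
  have "(\<lambda>x. (\<lambda>a x. a + h x) (g x) x) \<in> measurable N (count_space UNIV)"
  proof (rule measurable_compose_countable[OF _ g])
    fix a :: nat show "(\<lambda>x. a + h x) \<in> measurable N (count_space UNIV)"
      by (rule measurable_compose[OF h]) simp
  qed
  thus ?thesis by simp
qed

lemma meas_sum_nat:
  assumes "\<And>j. j \<in> A \<Longrightarrow> g j \<in> measurable N (count_space UNIV)"
  shows "(\<lambda>x. (\<Sum>j\<in>A. g j x :: nat)) \<in> measurable N (count_space UNIV)"
  using assms
proof (induction A rule: infinite_finite_induct)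
  case (insert a A) then show ?case by (simp add: meas_add_nat)
qed auto

lemma meas_step: "(\<And>j. j \<in> {1..k} \<Longrightarrow> Inl (Suc n, j) \<in> J) \<Longrightarrow> Inr (Suc n) \<in> J \<Longrightarrow>
   (\<lambda>f. (\<Sum>j = 1..k. f (Inl (Suc n, j))) + (f (Inr (Suc n)) :: nat)) \<in> measurable (PiM J (\<lambda>_. count_space UNIV)) (count_space UNIV)"
  by (intro meas_add_nat meas_sum_nat measurable_component_singleton) auto

lemma xf_meas: "Past n \<subseteq> J \<Longrightarrow> xf n \<in> measurable (PiM J (\<lambda>_. count_space UNIV)) (count_space UNIV)"
proof (induction n)
  case 0 then show ?case by simp
next
  case (Suc n)
  have "Past n \<subseteq> Past (Suc n)" by (auto simp: Past_def)
  hence m: "xf n \<in> measurable (PiM J (\<lambda>_. count_space UNIV)) (count_space UNIV)" using Suc by blast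
  have J1: "Inl (Suc n, j) \<in> J" if "1 \<le> j" for j using Suc.prems that by (auto simp: Past_def)
  have J2: "Inr (Suc n) \<in> J" using Suc.prems by (auto simp: Past_def)
  have "(\<lambda>f. (\<lambda>k f. (\<Sum>j = 1..k. f (Inl (Suc n, j))) + (f (Inr (Suc n)) :: nat)) (xf n f) f)
       \<in> measurable (PiM J (\<lambda>_. count_space UNIV)) (count_space UNIV)"
  proof (rule measurable_compose_countable[OF _ m])
    fix k :: nat
    show "(\<lambda>f. (\<Sum>j = 1..k. f (Inl (Suc n, j))) + (f (Inr (Suc n)) :: nat)) \<in> measurable (PiM J (\<lambda>_. count_space UNIV)) (count_space UNIV)"
    proof -
      have J1': "\<And>j. j \<in> {1..k} \<Longrightarrow> Inl (Suc n, j) \<in> J" using J1 by auto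
      show ?thesis by (rule meas_step[OF J1' J2])
    qed
  qed
  thus ?case by simp
qed

context prob_space begin

lemma norm_int_le1:
  fixes h :: "'a \<Rightarrow> complex"
  assumes "\<And>\<omega>. norm (h \<omega>) \<le> 1"
  shows "norm (\<integral>\<omega>. h \<omega> \<partial>M) \<le> 1"
proof -
  have "norm (\<integral>\<omega>. h \<omega> \<partial>M) \<le> (\<integral>\<omega>. norm (h \<omega>) \<partial>M)" by (rule integral_norm_bound)
  also have "\<dots> \<le> (\<integral>\<omega>. 1 \<partial>M)"
  proof (cases "integrable M (\<lambda>\<omega>. norm (h \<omega>))")
    case True then show ?thesis using assms by (intro integral_mono) auto
  next
    case False then show ?thesis by (simp add: not_integrable_integral_eq)
  qed
  finally show ?thesis by (simp add: prob_space)
qed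

lemma decomp_sums:
  fixes Z :: "'a \<Rightarrow> nat" and h :: "'a \<Rightarrow> complex"
  assumes Zm: "Z \<in> measurable M (count_space UNIV)" and hm: "h \<in> borel_measurable M"
    and hb: "\<And>\<omega>. norm (h \<omega>) \<le> 1"
  shows "(\<lambda>k. \<integral>\<omega>. (if Z \<omega> = k then h \<omega> else 0) \<partial>M) sums (\<integral>\<omega>. h \<omega> \<partial>M)"
proof -
  define f where "f k \<omega> = (if Z \<omega> = k then h \<omega> else 0)" for k \<omega>
  have fm: "f k \<in> borel_measurable M" for k
  proof -
    have "{\<omega> \<in> space M. Z \<omega> = k} \<in> sets M" using Zm by (auto intro: measurable_sets)
    then show ?thesis unfolding f_def using hm by measurable
  qed
  have fb: "norm (f k \<omega>) \<le> 1" for k \<omega> using hb by (simp add: f_def)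
  have fi: "integrable M (f k)" for k
    by (rule integrable_const_bound[where B=1]) (use fb fm in auto)
  have fs: "(\<lambda>k. f k \<omega>) sums h \<omega>" for \<omega>
    using sums_single[of "Z \<omega>" "\<lambda>_. h \<omega>"] by (simp add: f_def eq_commute)
  have fns: "(\<lambda>k. norm (f k \<omega>)) sums norm (h \<omega>)" for \<omega>
  proof -
    have "(\<lambda>k. norm (f k \<omega>)) = (\<lambda>k. if k = Z \<omega> then norm (h \<omega>) else 0)" by (auto simp: f_def)
    thus ?thesis using sums_single[of "Z \<omega>" "\<lambda>_. norm (h \<omega>)"] by simp
  qed
  have part: "(\<Sum>k<N. norm (f k \<omega>)) \<le> 1" for N \<omega>
  proof -
    have sm: "summable (\<lambda>k. norm (f k \<omega>))" and eqs: "(\<Sum>k. norm (f k \<omega>)) = norm (h \<omega>)"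
      using fns[of \<omega>] by (auto simp: sums_iff)
    have "(\<Sum>k<N. norm (f k \<omega>)) \<le> (\<Sum>k. norm (f k \<omega>))" by (rule sum_le_suminf[OF sm]) auto
    hence "(\<Sum>k<N. norm (f k \<omega>)) \<le> norm (h \<omega>)" using eqs by simp
    then show ?thesis using hb[of \<omega>] by linarith
  qed
  have sumi: "summable (\<lambda>k. \<integral>\<omega>. norm (f k \<omega>) \<partial>M)"
  proof (rule summableI_nonneg_bounded[where x=1])
    show "0 \<le> (\<integral>\<omega>. norm (f k \<omega>) \<partial>M)" for k by simp
    fix N
    have "(\<Sum>k<N. \<integral>\<omega>. norm (f k \<omega>) \<partial>M) = (\<integral>\<omega>. (\<Sum>k<N. norm (f k \<omega>)) \<partial>M)"
      using fi by (subst Bochner_Integration.integral_sum) auto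
    also have "\<dots> \<le> (\<integral>\<omega>. 1 \<partial>M)"
      using fi part by (intro integral_mono) auto
    finally show "(\<Sum>k<N. \<integral>\<omega>. norm (f k \<omega>) \<partial>M) \<le> 1" by (simp add: prob_space)
  qed
  have "(\<lambda>k. integral\<^sup>L M (f k)) sums (\<integral>\<omega>. (\<Sum>k. f k \<omega>) \<partial>M)"
    by (rule sums_integral[OF fi _ sumi]) (use fns in \<open>auto simp: sums_iff\<close>)
  moreover have "(\<lambda>\<omega>. \<Sum>k. f k \<omega>) = h" using fs by (auto simp: sums_iff)
  ultimately show ?thesis unfolding f_def[abs_def] by simp
qed

lemma pgf_sums:
  fixes Z :: "'a \<Rightarrow> nat" and z :: complex
  assumes Zm: "Z \<in> measurable M (count_space UNIV)" and z: "norm z \<le> 1"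
  shows "(\<lambda>k. (\<integral>\<omega>. (if Z \<omega> = k then 1 else 0) \<partial>M) * z ^ k) sums (\<integral>\<omega>. z ^ Z \<omega> \<partial>M)"
proof -
  have "(\<lambda>k. \<integral>\<omega>. (if Z \<omega> = k then z ^ Z \<omega> else 0) \<partial>M) sums (\<integral>\<omega>. z ^ Z \<omega> \<partial>M)"
  proof (rule decomp_sums[OF Zm])
    show "(\<lambda>\<omega>. z ^ Z \<omega>) \<in> borel_measurable M"
      by (rule measurable_compose[OF Zm]) simp
    show "norm (z ^ Z \<omega>) \<le> 1" for \<omega> by (simp add: norm_power z power_le_one)
  qed
  moreover have "(\<integral>\<omega>. (if Z \<omega> = k then z ^ Z \<omega> else 0) \<partial>M) = (\<integral>\<omega>. (if Z \<omega> = k then 1 else 0) \<partial>M) * z ^ k" for k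
  proof -
    have "(\<integral>\<omega>. (if Z \<omega> = k then z ^ Z \<omega> else 0) \<partial>M) = (\<integral>\<omega>. (if Z \<omega> = k then 1 else 0) * z ^ k \<partial>M)"
      by (rule Bochner_Integration.integral_cong) auto
    also have "\<dots> = (\<integral>\<omega>. (if Z \<omega> = k then 1 else 0) \<partial>M) * z ^ k" by simp
    finally show ?thesis .
  qed
  ultimately show ?thesis by simp
qed

end

locale bgw = prob_space M for M :: "'a measure" +
  fixes \<xi> :: "nat \<Rightarrow> nat \<Rightarrow> 'a \<Rightarrow> nat" and \<epsilon> :: "nat \<Rightarrow> 'a \<Rightarrow> nat" and X :: "nat \<Rightarrow> 'a \<Rightarrow> nat"
  assumes indep: "indep_vars (\<lambda>_. count_space UNIV)
          (\<lambda>i. case i of Inl (n, j) \<Rightarrow> \<xi> n j | Inr n \<Rightarrow> \<epsilon> n)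
          ({Inl (n, j) | n j. 1 \<le> n \<and> 1 \<le> j} \<union> {Inr n | n. 1 \<le> n})"
    and X0: "\<And>\<omega>. X 0 \<omega> = 0"
    and XS: "\<And>n \<omega>. X (Suc n) \<omega> = (\<Sum>j = 1..X n \<omega>. \<xi> (Suc n) j \<omega>) + \<epsilon> (Suc n) \<omega>"
begin

definition Y :: "(nat \<times> nat) + nat \<Rightarrow> 'a \<Rightarrow> nat" where
  "Y i = (case i of Inl (n, j) \<Rightarrow> \<xi> n j | Inr n \<Rightarrow> \<epsilon> n)"

definition II :: "((nat \<times> nat) + nat) set" where
  "II = {Inl (n, j) | n j. 1 \<le> n \<and> 1 \<le> j} \<union> {Inr n | n. 1 \<le> n}"

lemma indepY: "indep_vars (\<lambda>_. count_space UNIV) Y II"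
  using indep unfolding Y_def[abs_def] II_def .

lemma Y_meas: "i \<in> II \<Longrightarrow> Y i \<in> measurable M (count_space UNIV)"
  using indepY by (auto simp: indep_vars_def)

lemma xi_meas: "1 \<le> n \<Longrightarrow> 1 \<le> j \<Longrightarrow> \<xi> n j \<in> measurable M (count_space UNIV)"
  using Y_meas[of "Inl (n, j)"] by (auto simp: II_def Y_def)

lemma eps_meas: "1 \<le> n \<Longrightarrow> \<epsilon> n \<in> measurable M (count_space UNIV)"
  using Y_meas[of "Inr n"] by (auto simp: II_def Y_def)

lemma Past_II: "Past n \<subseteq> II" by (auto simp: Past_def II_def)

lemma X_xf: "X n \<omega> = xf n (\<lambda>i. Y i \<omega>)"
  by (induction n) (auto simp: X0 XS Y_def)

lemma X_restrict: "X n \<omega> = xf n (restrict (\<lambda>i. Y i \<omega>) (Past n))"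
  unfolding X_xf by (rule xf_cong) simp

lemma restrict_meas: "J \<subseteq> II \<Longrightarrow> (\<lambda>\<omega>. restrict (\<lambda>i. Y i \<omega>) J) \<in> measurable M (PiM J (\<lambda>_. count_space UNIV))"
  using Y_meas by (intro measurable_restrict) auto

lemma X_meas: "X n \<in> measurable M (count_space UNIV)"
proof -
  have "(\<lambda>\<omega>. xf n (restrict (\<lambda>i. Y i \<omega>) (Past n))) \<in> measurable M (count_space UNIV)"
    by (rule measurable_compose[OF restrict_meas[OF Past_II] xf_meas]) simp
  thus ?thesis unfolding X_restrict[symmetric] by simp
qed

lemma indep_step:
  fixes w :: complex
  assumes w: "norm w \<le> 1"
  shows "(\<integral>\<omega>. (if X n \<omega> = k then 1 else 0) * ((\<Prod>j=1..k. w ^ \<xi> (Suc n) j \<omega>) * w ^ \<epsilon> (Suc n) \<omega>) \<partial>M)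
   = (\<integral>\<omega>. (if X n \<omega> = k then 1 else 0) \<partial>M) * ((\<Prod>j=1..k. \<integral>\<omega>. w ^ \<xi> (Suc n) j \<omega> \<partial>M) * (\<integral>\<omega>. w ^ \<epsilon> (Suc n) \<omega> \<partial>M))"
proof -
  define S where "S = (\<lambda>j. Inl (Suc n, j)) ` {1..k} \<union> {Inr (Suc n)}"
  define L where "L = insert None (Some ` S)"
  define K where "K j = (case j of None \<Rightarrow> Past n | Some i \<Rightarrow> {i})" for j
  have finS: "finite S" and finL: "finite L" by (auto simp: S_def L_def)
  have SII: "S \<subseteq> II" by (auto simp: S_def II_def)
  have KI: "K j \<subseteq> II" if "j \<in> L" for j
    using that Past_II[of n] SII by (auto simp: L_def K_def)
  have disj: "disjoint_family_on K L"
    unfolding disjoint_family_on_def L_def K_def S_def Past_def by auto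
  have ind1: "indep_vars (\<lambda>j. PiM (K j) (\<lambda>_. count_space UNIV)) (\<lambda>j \<omega>. restrict (\<lambda>i. Y i \<omega>) (K j)) L"
    by (rule indep_vars_restrict[OF indepY KI disj])
  define Zf :: "((nat \<times> nat) + nat) option \<Rightarrow> ((nat \<times> nat) + nat \<Rightarrow> nat) \<Rightarrow> complex" where
    "Zf j f = (case j of None \<Rightarrow> (if xf n f = k then 1 else 0) | Some i \<Rightarrow> w ^ f i)" for j f
  have Zm: "Zf j \<in> measurable (PiM (K j) (\<lambda>_. count_space UNIV)) borel" if "j \<in> L" for j
  proof (cases j)
    case None
    have "(\<lambda>f. (\<lambda>a. if a = k then 1 else (0::complex)) (xf n f)) \<in> measurable (PiM (Past n) (\<lambda>_. count_space UNIV)) borel"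
      by (rule measurable_compose[OF xf_meas]) auto
    thus ?thesis using None by (simp add: Zf_def[abs_def] K_def)
  next
    case (Some i)
    have "(\<lambda>f. (\<lambda>a. w ^ a) (f i)) \<in> measurable (PiM {i} (\<lambda>_. count_space UNIV)) borel"
      by (rule measurable_compose[OF measurable_component_singleton]) auto
    thus ?thesis using Some by (simp add: Zf_def[abs_def] K_def)
  qed
  define F where "F j \<omega> = Zf j (restrict (\<lambda>i. Y i \<omega>) (K j))" for j \<omega>
  have ind2: "indep_vars (\<lambda>_. borel) F L"
    unfolding F_def by (rule indep_vars_compose2[OF ind1 Zm])
  have Fb: "norm (F j \<omega>) \<le> 1" for j \<omega>
    by (cases j) (auto simp: F_def Zf_def norm_power w power_le_one)
  have Fi: "integrable M (F j)" if "j \<in> L" for j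
  proof (rule integrable_const_bound[where B=1])
    show "AE x in M. norm (F j x) \<le> 1" using Fb by simp
    show "F j \<in> borel_measurable M" using ind2 that by (auto simp: indep_vars_def)
  qed
  have main: "(\<integral>\<omega>. (\<Prod>j\<in>L. F j \<omega>) \<partial>M) = (\<Prod>j\<in>L. \<integral>\<omega>. F j \<omega> \<partial>M)"
    by (rule indep_vars_lebesgue_integral[OF finL ind2 Fi])
  have prodS: "(\<Prod>i\<in>S. g i) = (\<Prod>j=1..k. g (Inl (Suc n, j))) * g (Inr (Suc n))" for g :: "_ \<Rightarrow> complex"
  proof -
    have "S = insert (Inr (Suc n)) ((\<lambda>j. Inl (Suc n, j)) ` {1..k})" by (auto simp: S_def)
    moreover have "Inr (Suc n) \<notin> (\<lambda>j. Inl (Suc n, j)) ` {1..k}" by auto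
    moreover have inj: "inj_on (\<lambda>j. Inl (Suc n, j)) {1..k}" by (auto simp: inj_on_def)
    have r: "(\<Prod>i\<in>(\<lambda>j. Inl (Suc n, j)) ` {1..k}. g i) = (\<Prod>j=1..k. g (Inl (Suc n, j)))"
      using prod.reindex[OF inj, of g] by (simp add: o_def)
    ultimately show ?thesis by (simp add: mult.commute r)
  qed
  have prodL: "(\<Prod>j\<in>L. h j) = h None * (\<Prod>i\<in>S. h (Some i))" for h :: "_ \<Rightarrow> complex"
    unfolding L_def using finS by (simp add: prod.reindex)
  have FN: "F None \<omega> = (if X n \<omega> = k then 1 else 0)" for \<omega>
    by (simp add: F_def Zf_def K_def X_restrict[of n \<omega>])
  have FS: "F (Some i) \<omega> = w ^ Y i \<omega>" for i \<omega>
    by (simp add: F_def Zf_def K_def)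
  have lhs: "(\<Prod>j\<in>L. F j \<omega>) = (if X n \<omega> = k then 1 else 0) * ((\<Prod>j=1..k. w ^ \<xi> (Suc n) j \<omega>) * w ^ \<epsilon> (Suc n) \<omega>)" for \<omega>
    unfolding prodL prodS FN FS by (simp add: Y_def)
  have rhs: "(\<Prod>j\<in>L. \<integral>\<omega>. F j \<omega> \<partial>M) = (\<integral>\<omega>. (if X n \<omega> = k then 1 else 0) \<partial>M) * ((\<Prod>j=1..k. \<integral>\<omega>. w ^ \<xi> (Suc n) j \<omega> \<partial>M) * (\<integral>\<omega>. w ^ \<epsilon> (Suc n) \<omega> \<partial>M))"
    unfolding prodL prodS FN FS by (simp add: Y_def)
  show ?thesis using main unfolding lhs rhs .
qed

definition PX :: "nat \<Rightarrow> nat \<Rightarrow> complex" where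
  "PX n k = (\<integral>\<omega>. (if X n \<omega> = k then 1 else 0) \<partial>M)"

definition phi :: "nat \<Rightarrow> complex \<Rightarrow> complex" where
  "phi n w = (\<integral>\<omega>. w ^ X n \<omega> \<partial>M)"

lemma phi_sums:
  assumes z: "norm z \<le> 1"
  shows "(\<lambda>k. PX n k * z ^ k) sums phi n z"
  unfolding PX_def phi_def by (rule pgf_sums[OF X_meas z])

lemma phi0: "phi 0 w = 1"
  by (simp add: phi_def X0 prob_space)

lemma phi_le1: "norm w \<le> 1 \<Longrightarrow> norm (phi n w) \<le> 1"
  unfolding phi_def by (rule norm_int_le1) (simp add: norm_power power_le_one)

lemma phi_rec:
  fixes w :: complex
  assumes w: "norm w \<le> 1"
    and id: "\<And>j. 1 \<le> j \<Longrightarrow> (\<integral>\<omega>. w ^ \<xi> (Suc n) j \<omega> \<partial>M) = (\<integral>\<omega>. w ^ \<xi> (Suc n) 1 \<omega> \<partial>M)"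
  shows "phi (Suc n) w = phi n (\<integral>\<omega>. w ^ \<xi> (Suc n) 1 \<omega> \<partial>M) * (\<integral>\<omega>. w ^ \<epsilon> (Suc n) \<omega> \<partial>M)"
proof -
  define Gs where "Gs = (\<integral>\<omega>. w ^ \<xi> (Suc n) 1 \<omega> \<partial>M)"
  define Bs where "Bs = (\<integral>\<omega>. w ^ \<epsilon> (Suc n) \<omega> \<partial>M)"
  have Gs1: "norm Gs \<le> 1" unfolding Gs_def by (rule norm_int_le1) (simp add: norm_power w power_le_one)
  have s1: "(\<lambda>k. \<integral>\<omega>. (if X n \<omega> = k then w ^ X (Suc n) \<omega> else 0) \<partial>M) sums phi (Suc n) w"
    unfolding phi_def
  proof (rule decomp_sums[OF X_meas])
    show "(\<lambda>\<omega>. w ^ X (Suc n) \<omega>) \<in> borel_measurable M"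
      by (rule measurable_compose[OF X_meas]) simp
    show "norm (w ^ X (Suc n) \<omega>) \<le> 1" for \<omega> by (simp add: norm_power w power_le_one)
  qed
  have tm: "(\<integral>\<omega>. (if X n \<omega> = k then w ^ X (Suc n) \<omega> else 0) \<partial>M) = PX n k * Gs ^ k * Bs" for k
  proof -
    have "(\<integral>\<omega>. (if X n \<omega> = k then w ^ X (Suc n) \<omega> else 0) \<partial>M)
        = (\<integral>\<omega>. (if X n \<omega> = k then 1 else 0) * ((\<Prod>j=1..k. w ^ \<xi> (Suc n) j \<omega>) * w ^ \<epsilon> (Suc n) \<omega>) \<partial>M)"
      by (rule Bochner_Integration.integral_cong) (auto simp: XS power_add power_sum)
    also have "\<dots> = PX n k * ((\<Prod>j=1..k. \<integral>\<omega>. w ^ \<xi> (Suc n) j \<omega> \<partial>M) * Bs)"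
      unfolding indep_step[OF w] PX_def Bs_def ..
    also have "(\<Prod>j=1..k. \<integral>\<omega>. w ^ \<xi> (Suc n) j \<omega> \<partial>M) = (\<Prod>j=1..k. Gs)"
    proof (rule prod.cong)
      fix j assume "j \<in> {1..k}"
      thus "(\<integral>\<omega>. w ^ \<xi> (Suc n) j \<omega> \<partial>M) = Gs" unfolding Gs_def by (intro id) auto
    qed simp
    finally show ?thesis by (simp add: mult_ac)
  qed
  have s2: "(\<lambda>k. PX n k * Gs ^ k * Bs) sums (phi n Gs * Bs)"
    by (rule sums_mult2[OF phi_sums[OF Gs1]])
  from s1 s2 show ?thesis unfolding tm Gs_def[symmetric] Bs_def[symmetric] by (rule sums_unique2)
qed

end


lemma iexp_nat: "iexp (t * real k) = iexp t ^ k"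
proof -
  have "\<i> * complex_of_real (t * real k) = of_nat k * (\<i> * complex_of_real t)" by simp
  thus ?thesis by (simp only: exp_of_nat_mult)
qed

lemma char_poisson0:
  assumes lam: "0 \<le> lam"
  shows "char (distr (measure_pmf (poisson0_pmf lam)) borel real) t = exp (of_real lam * (iexp t - 1))"
proof -
  define z where "z = iexp t"
  have z1: "norm z \<le> 1" by (simp add: z_def)
  have "char (distr (measure_pmf (poisson0_pmf lam)) borel real) t = (\<integral>k. z ^ k \<partial>measure_pmf (poisson0_pmf lam))"
    unfolding char_def
    apply (subst integral_distr)
      apply simp
     apply simp
    apply (rule Bochner_Integration.integral_cong[OF refl])
    apply (simp only: z_def iexp_nat)
    done
  also have "\<dots> = exp (of_real lam * (z - 1))"
  proof (cases "lam = 0")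
    case True
    then show ?thesis by (simp add: poisson0_pmf_def integral_measure_pmf[of "{0}"])
  next
    case False
    with lam have lp: "0 < lam" by simp
    have s1: "(\<lambda>k. (\<integral>\<omega>. (if \<omega> = k then 1 else 0) \<partial>measure_pmf (poisson_pmf lam)) * z ^ k) sums (\<integral>k. z ^ k \<partial>measure_pmf (poisson_pmf lam))"
      using measure_pmf.pgf_sums[of "\<lambda>x. x" "poisson_pmf lam" z] z1 by simp
    have ev: "(\<integral>\<omega>. (if \<omega> = k then 1 else 0) \<partial>measure_pmf (poisson_pmf lam)) = complex_of_real (lam ^ k / fact k * exp (- lam))" for k
      using lp by (subst integral_measure_pmf[of "{k}"]) (auto simp: scaleR_conv_of_real split: if_splits)
    have s2: "(\<lambda>k. complex_of_real (exp (- lam)) * ((of_real lam * z) ^ k /\<^sub>R fact k)) sums (complex_of_real (exp (- lam)) * exp (of_real lam * z))"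
      by (rule sums_mult[OF exp_converges])
    have eq: "complex_of_real (exp (- lam)) * ((of_real lam * z) ^ k /\<^sub>R fact k) = complex_of_real (lam ^ k / fact k * exp (- lam)) * z ^ k" for k
      by (simp add: scaleR_conv_of_real power_mult_distrib field_simps)
    have "(\<integral>k. z ^ k \<partial>measure_pmf (poisson_pmf lam)) = complex_of_real (exp (- lam)) * exp (of_real lam * z)"
      using s1 s2 unfolding ev eq by (rule sums_unique2)
    also have "\<dots> = exp (of_real lam * (z - 1))"
      by (simp add: exp_of_real[symmetric] exp_add[symmetric] algebra_simps)
    finally show ?thesis using False by (simp add: poisson0_pmf_def)
  qed
  finally show ?thesis by (simp add: z_def)
qed

theorem theorem1:
  fixes M :: "'a measure"
    and \<xi> :: "nat \<Rightarrow> nat \<Rightarrow> 'a \<Rightarrow> nat"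
    and \<epsilon> :: "nat \<Rightarrow> 'a \<Rightarrow> nat"
    and X :: "nat \<Rightarrow> 'a \<Rightarrow> nat"
    and \<rho> G2 m :: "nat \<Rightarrow> real"
    and lam :: real
  assumes P: "prob_space M"
    and indep: "prob_space.indep_vars M (\<lambda>_. count_space UNIV)
          (\<lambda>i. case i of Inl (n, j) \<Rightarrow> \<xi> n j | Inr n \<Rightarrow> \<epsilon> n)
          ({Inl (n, j) | n j. 1 \<le> n \<and> 1 \<le> j} \<union> {Inr n | n. 1 \<le> n})"
    and ident: "\<And>n j. 1 \<le> n \<Longrightarrow> 1 \<le> j \<Longrightarrow>
          distr M (count_space UNIV) (\<xi> n j) = distr M (count_space UNIV) (\<xi> n 1)"
    and X0: "\<And>\<omega>. X 0 \<omega> = 0"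
    and XS: "\<And>n \<omega>. X (Suc n) \<omega> = (\<Sum>j = 1..X n \<omega>. \<xi> (Suc n) j \<omega>) + \<epsilon> (Suc n) \<omega>"
    and int1: "\<And>n. 1 \<le> n \<Longrightarrow> integrable M (\<lambda>\<omega>. real (\<xi> n 1 \<omega>))"
    and rho_def: "\<And>n. 1 \<le> n \<Longrightarrow> \<rho> n = prob_space.expectation M (\<lambda>\<omega>. real (\<xi> n 1 \<omega>))"
    and int2: "\<And>n. 1 \<le> n \<Longrightarrow> integrable M (\<lambda>\<omega>. real (\<xi> n 1 \<omega> * (\<xi> n 1 \<omega> - 1)))"
    and G2_def: "\<And>n. 1 \<le> n \<Longrightarrow>
          G2 n = prob_space.expectation M (\<lambda>\<omega>. real (\<xi> n 1 \<omega> * (\<xi> n 1 \<omega> - 1)))"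
    and m_range: "\<And>n. 1 \<le> n \<Longrightarrow> 0 \<le> m n \<and> m n \<le> 1"
    and eps_bern: "\<And>n. 1 \<le> n \<Longrightarrow>
          distr M (count_space UNIV) (\<epsilon> n) = measure_pmf (bernoulli_nat_pmf (m n))"
    and rho_lt: "\<And>n. 1 \<le> n \<Longrightarrow> \<rho> n < 1"
    and rho_lim: "\<rho> \<longlonglongrightarrow> 1"
    and rho_div: "filterlim (\<lambda>N. \<Sum>n = 1..N. 1 - \<rho> n) at_top sequentially"
    and G2_lim: "(\<lambda>n. G2 n / (1 - \<rho> n)) \<longlonglongrightarrow> 0"
    and lam_nonneg: "0 \<le> lam"
    and m_lim: "(\<lambda>n. m n / (1 - \<rho> n)) \<longlonglongrightarrow> lam"
  shows "weak_conv_m (\<lambda>n. real_law M (X n))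
           (distr (measure_pmf (poisson0_pmf lam)) borel real)"
proof -
  interpret bgw M \<xi> \<epsilon> X
    by (intro bgw.intro bgw_axioms.intro P indep X0 XS)
  define G :: "nat \<Rightarrow> complex \<Rightarrow> complex" where "G n w = (\<integral>\<omega>. w ^ \<xi> n 1 \<omega> \<partial>M)" for n w
  have idn: "(\<integral>\<omega>. w ^ \<xi> n j \<omega> \<partial>M) = (\<integral>\<omega>. w ^ \<xi> n 1 \<omega> \<partial>M)" if "1 \<le> n" "1 \<le> j" for n j and w :: complex
  proof -
    have "(\<integral>\<omega>. w ^ \<xi> n j \<omega> \<partial>M) = (\<integral>a. w ^ a \<partial>distr M (count_space UNIV) (\<xi> n j))"
      using xi_meas[OF that] by (subst integral_distr) auto
    also have "\<dots> = (\<integral>a. w ^ a \<partial>distr M (count_space UNIV) (\<xi> n 1))" using ident[OF that] by simp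
    also have "\<dots> = (\<integral>\<omega>. w ^ \<xi> n 1 \<omega> \<partial>M)"
      using xi_meas[OF that(1) order_refl] by (subst integral_distr) auto
    finally show ?thesis .
  qed
  have epsI: "(\<integral>\<omega>. w ^ \<epsilon> n \<omega> \<partial>M) = 1 - of_real (m n) * (1 - w)" if "1 \<le> n" for n and w :: complex
  proof -
    have mr: "0 \<le> m n" "m n \<le> 1" using m_range[OF that] by auto
    have "(\<integral>\<omega>. w ^ \<epsilon> n \<omega> \<partial>M) = (\<integral>a. w ^ a \<partial>distr M (count_space UNIV) (\<epsilon> n))"
      using eps_meas[OF that] by (subst integral_distr) auto
    also have "\<dots> = (\<integral>a. w ^ a \<partial>measure_pmf (bernoulli_nat_pmf (m n)))" using eps_bern[OF that] by simp
    also have "\<dots> = (\<integral>b. w ^ (if b then 1 else 0) \<partial>measure_pmf (bernoulli_pmf (m n)))"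
      by (simp add: bernoulli_nat_pmf_def)
    also have "\<dots> = (\<Sum>b\<in>UNIV. pmf (bernoulli_pmf (m n)) b *\<^sub>R w ^ (if b then 1 else 0))"
      by (rule integral_measure_pmf) auto
    also have "\<dots> = 1 - of_real (m n) * (1 - w)"
      using mr by (simp add: UNIV_bool scaleR_conv_of_real algebra_simps)
    finally show ?thesis .
  qed
  have \<rho>0: "0 \<le> \<rho> n" if "1 \<le> n" for n
    using rho_def[OF that] by simp
  have G2nn: "0 \<le> G2 n" if "1 \<le> n" for n
    using G2_def[OF that] by simp
  define c where "c n = exp (2*lam) * lam * G2 n + \<bar>m n - lam * (1 - \<rho> n)\<bar> + 2 * exp (2*lam) * lam^2 * (1 - \<rho> n)^2" for n
  define d where "d = rec_nat 0 (\<lambda>n x. \<rho> (Suc n) * x + c (Suc n))"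
  have d0: "d 0 = 0" and dS: "d (Suc n) = \<rho> (Suc n) * d n + c (Suc n)" for n
    by (simp_all add: d_def)
  have A1: "phi 0 w = 1" for w by (rule phi0)
  have A2: "phi (Suc n) w = phi n (G (Suc n) w) * (1 - complex_of_real (m (Suc n)) * (1 - w))" if "norm w \<le> 1" for n w
    using phi_rec[OF that idn] epsI[of "Suc n" w] by (simp add: G_def)
  have A3: "norm (phi n w) \<le> 1" if "norm w \<le> 1" for n w using phi_le1[OF that] .
  have A4: "norm (G n w) \<le> 1" if "1 \<le> n" "norm w \<le> 1" for n w
    unfolding G_def by (rule pgf_bounds(1)[OF xi_meas[OF that(1) order_refl] int1[OF that(1)] int2[OF that(1)] that(2)])
  have A5: "norm (1 - G n w) \<le> \<rho> n * norm (1 - w)" if "1 \<le> n" "norm w \<le> 1" for n w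
    unfolding G_def rho_def[OF that(1)] by (rule pgf_bounds(2)[OF xi_meas[OF that(1) order_refl] int1[OF that(1)] int2[OF that(1)] that(2)])
  have A6: "norm (G n w - (1 - complex_of_real (\<rho> n) * (1 - w))) \<le> G2 n * norm (1 - w)" if "1 \<le> n" "norm w \<le> 1" for n w
    unfolding G_def rho_def[OF that(1)] G2_def[OF that(1)] by (rule pgf_bounds(3)[OF xi_meas[OF that(1) order_refl] int1[OF that(1)] int2[OF that(1)] that(2)])
  have A7: "\<rho> n \<le> 1" if "1 \<le> n" for n using rho_lt[OF that] by simp
  have A8: "d (Suc n) = \<rho> (Suc n) * d n + (exp (2*lam) * lam * G2 (Suc n) + \<bar>m (Suc n) - lam * (1 - \<rho> (Suc n))\<bar>
                 + 2 * exp (2*lam) * lam^2 * (1 - \<rho> (Suc n))^2)" for n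
    by (simp add: dS c_def)
  have bound: "norm (phi n w - exp (- (of_real (lam * (1 - (\<Prod>j=1..n. \<rho> j))) * (1 - w)))) \<le> d n * norm (1 - w)"
    if "norm w \<le> 1" for n w
    by (rule phi_psi_bound[OF A1 A2 A3 A4 A5 A6 \<rho>0 A7 m_range lam_nonneg d0 A8 that])
  have clim: "(\<lambda>n. c n / (1 - \<rho> n)) \<longlonglongrightarrow> 0"
  proof -
    have "(\<lambda>n. exp (2*lam) * lam * (G2 n / (1 - \<rho> n)) + \<bar>m n / (1 - \<rho> n) - lam\<bar> + 2 * exp (2*lam) * lam^2 * (1 - \<rho> n))
        \<longlonglongrightarrow> exp (2*lam) * lam * 0 + \<bar>lam - lam\<bar> + 2 * exp (2*lam) * lam^2 * (1 - 1)"
      by (intro tendsto_intros G2_lim m_lim rho_lim)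
    hence l: "(\<lambda>n. exp (2*lam) * lam * (G2 n / (1 - \<rho> n)) + \<bar>m n / (1 - \<rho> n) - lam\<bar> + 2 * exp (2*lam) * lam^2 * (1 - \<rho> n)) \<longlonglongrightarrow> 0"
      by simp
    have "eventually (\<lambda>n. exp (2*lam) * lam * (G2 n / (1 - \<rho> n)) + \<bar>m n / (1 - \<rho> n) - lam\<bar> + 2 * exp (2*lam) * lam^2 * (1 - \<rho> n)
        = c n / (1 - \<rho> n)) sequentially"
    proof (rule eventually_sequentiallyI[of 1])
      fix n :: nat assume n: "1 \<le> n"
      have p: "0 < 1 - \<rho> n" using rho_lt[OF n] by simp
      have "\<bar>m n / (1 - \<rho> n) - lam\<bar> = \<bar>m n - lam * (1 - \<rho> n)\<bar> / (1 - \<rho> n)"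
      proof -
        have "m n / (1 - \<rho> n) - lam = (m n - lam * (1 - \<rho> n)) / (1 - \<rho> n)" using p by (simp add: field_simps)
        thus ?thesis using p by simp
      qed
      moreover have "exp (2*lam) * lam * G2 n / (1 - \<rho> n) = exp (2*lam) * lam * (G2 n / (1 - \<rho> n))" by simp
      moreover have "2 * exp (2*lam) * lam^2 * (1 - \<rho> n)^2 / (1 - \<rho> n) = 2 * exp (2*lam) * lam^2 * (1 - \<rho> n)"
        using p by (simp add: power2_eq_square)
      ultimately show "exp (2*lam) * lam * (G2 n / (1 - \<rho> n)) + \<bar>m n / (1 - \<rho> n) - lam\<bar> + 2 * exp (2*lam) * lam^2 * (1 - \<rho> n)
        = c n / (1 - \<rho> n)" unfolding c_def add_divide_distrib by simp
    qed
    with l show ?thesis by (rule Lim_transform_eventually)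
  qed
  have cnn: "0 \<le> c n" if "1 \<le> n" for n using G2nn[OF that] lam_nonneg by (simp add: c_def)
  have dd0: "0 \<le> d 0" using d0 by simp
  have dlim: "d \<longlonglongrightarrow> 0"
    by (rule d_tendsto_zero[OF \<rho>0 rho_lt rho_div cnn clim dd0 dS])
  have \<pi>lim: "(\<lambda>n. \<Prod>j=1..n. \<rho> j) \<longlonglongrightarrow> 0"
    using prod_tail_tendsto_zero[OF \<rho>0 rho_div, of 0] by simp
  have charX: "char (real_law M (X n)) t = phi n (iexp t)" for n t
  proof -
    have Xm: "(\<lambda>\<omega>. real (X n \<omega>)) \<in> borel_measurable M"
      by (rule measurable_compose[OF X_meas]) simp
    show ?thesis
      unfolding char_def real_law_def phi_def
      apply (subst integral_distr[OF Xm])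
       apply simp
      apply (rule Bochner_Integration.integral_cong[OF refl])
      apply (simp only: iexp_nat)
      done
  qed
  have conv: "(\<lambda>n. phi n (iexp t)) \<longlonglongrightarrow> exp (of_real lam * (iexp t - 1))" for t
  proof -
    define z where "z = iexp t"
    have z1: "norm z \<le> 1" by (simp add: z_def)
    have psi: "(\<lambda>n. exp (- (of_real (lam * (1 - (\<Prod>j=1..n. \<rho> j))) * (1 - z)))) \<longlonglongrightarrow> exp (- (of_real (lam * (1 - 0)) * (1 - z)))"
      by (intro tendsto_intros \<pi>lim)
    have diff: "(\<lambda>n. phi n z - exp (- (of_real (lam * (1 - (\<Prod>j=1..n. \<rho> j))) * (1 - z)))) \<longlonglongrightarrow> 0"
    proof (rule Lim_null_comparison)
      show "eventually (\<lambda>n. norm (phi n z - exp (- (of_real (lam * (1 - (\<Prod>j=1..n. \<rho> j))) * (1 - z)))) \<le> d n * norm (1 - z)) sequentially"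
        using bound[OF z1] by simp
      show "(\<lambda>n. d n * norm (1 - z)) \<longlonglongrightarrow> 0"
        using tendsto_mult[OF dlim tendsto_const[of "norm (1 - z)"]] by simp
    qed
    have "(\<lambda>n. (phi n z - exp (- (of_real (lam * (1 - (\<Prod>j=1..n. \<rho> j))) * (1 - z)))) + exp (- (of_real (lam * (1 - (\<Prod>j=1..n. \<rho> j))) * (1 - z))))
        \<longlonglongrightarrow> 0 + exp (- (of_real (lam * (1 - 0)) * (1 - z)))"
      by (rule tendsto_add[OF diff psi])
    moreover have "exp (- (of_real (lam * (1 - 0)) * (1 - z))) = exp (of_real lam * (z - 1))"
      by (simp add: algebra_simps)
    ultimately show ?thesis by (simp add: z_def)
  qed
  show ?thesis
  proof (rule levy_continuity)
    show "real_distribution (real_law M (X n))" for n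
      unfolding real_law_def by (rule real_distribution_distr) (rule measurable_compose[OF X_meas], simp)
    show "real_distribution (distr (measure_pmf (poisson0_pmf lam)) borel real)"
      by (rule prob_space.real_distribution_distr[OF prob_space_measure_pmf]) simp
    show "(\<lambda>n. char (real_law M (X n)) t) \<longlonglongrightarrow> char (distr (measure_pmf (poisson0_pmf lam)) borel real) t" for t
      unfolding charX char_poisson0[OF lam_nonneg] by (rule conv)
  qed
qed


end
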